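(* Let $n\ge r\ge1$, let $\mathcal{O}\subset\mathbb{R}^{n\times r}$ be open with ${\rm St}(n,r)\subset\mathcal{O}$, let $f:\mathcal{O}\to\mathbb{R}$ be continuously differentiable, and consider (P): $\min_{X\in\mathcal{S}_{+}^{n,r}}f(X)$. Fix $\gamma>0$. Suppose that every global (respectively, local) minimizer of (P) has no zero rows when $n>r>1$, and that for every global (respectively, local) minimizer $X^*$ of (P) there exist $\delta'>0$ and $L'>0$ such that for all $X\in{\rm St}(n,r)$ with $\|X-X^*\|_F\le\delta'$ and all $\overline{X}\in{\rm Proj}_{\mathcal{S}_{+}^{n,r}}(X)$, \[ f(X)-f(\overline{X})\ge -L'\|X-\overline{X}\|_F^2. \] Then for every global (respectively, local) minimizer $X^*$ of (P): 1. if $n=r$ or $n>r=1$, with $\kappa'>0$ a constant such that ${\rm dist}(Z,\mathcal{S}_{+}^{n,r})\le\kappa'{\rm dist}(Z,\mathbb{R}_{+}^{n\times r})$ for all $Z\in{\rm St}(n,r)$, there exists $\delta>0$ such that for all $X\in{\rm St}(n,r)$ with $\|X-X^*\|_F\le\delta$, $f(X)-f(X^* )+2\gamma(\kappa')^2L'\,e_\gamma\vartheta(X)\ge0$; 2. if $n>r>1$, with $\kappa:=\frac{2.1\sqrt{r}[1+3r(n-r)]}{X^*_{i^*j^*}}$ ($X^*_{i^*j^*}$ the smallest nonzero entry of $X^*$), there exists $\delta>0$ such that for all $\epsilon\ge0$ and all $X\in\mathcal{G}_\epsilon:=\{X\in{\rm St}(n,r): e_\gamma\vartheta(X)=\epsilon\}$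 with $\|X-X^*\|_F\le\delta$, $f(X)-f(X^* )+2\gamma\kappa^2L'\,e_\gamma\vartheta(X)\ge0$. Consequently, there exists $\widehat{\rho}>0$ such that for every $\rho\ge\widehat{\rho}$ the problem $\min_{X\in{\rm St}(n,r)}\{f(X)+\rho\, e_\gamma\vartheta(X)\}$ has the same set of global optimal solutions as (P).
   Context: ${\rm St}(n,r):=\{X\in\mathbb{R}^{n\times r}: X^\top X=I_r\}$, $\mathbb{R}_{+}^{n\times r}$ the entrywise nonnegative matrices, $\mathcal{S}_{+}^{n,r}:=\mathbb{R}_{+}^{n\times r}\cap{\rm St}(n,r)$, ${\rm dist}$ the Frobenius-norm distance and ${\rm Proj}_{\Omega}(X)$ the (set of) nearest points of $\Omega$ to $X$ in Frobenius norm. $\vartheta(X):=\sum_{i,j}\max(0,-X_{ij})$, and $e_\gamma\vartheta(X):=\min_{Z\in\mathbb{R}^{n\times r}}\{\frac{1}{2\gamma}\|Z-X\|_F^2+\vartheta(Z)\}$ is its Moreau envelope. *)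

theory Defs
  imports "HOL-Analysis.Analysis"
begin

text \<open>Matrices in R^(n x r) are modelled as real^'r^'n (rows indexed by 'n, columns by 'r).
  The norm on this type is the Frobenius norm, and dist is the Frobenius distance.\<close>

definition stiefel :: "(real^'r^'n) set" where
  "stiefel = {X. transpose X ** X = mat 1}"

definition nonneg_mats :: "(real^'r^'n) set" where
  "nonneg_mats = {X. \<forall>i j. 0 \<le> X $ i $ j}"

definition nn_stiefel :: "(real^'r^'n) set" where
  "nn_stiefel = nonneg_mats \<inter> stiefel"

definition proj_set :: "(real^'r^'n) set \<Rightarrow> real^'r^'n \<Rightarrow> (real^'r^'n) set" where
  "proj_set S X = {Y \<in> S. \<forall>Z\<in>S. dist X Y \<le> dist X Z}"

definition theta :: "real^'r^'n \<Rightarrow> real" where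
  "theta X = (\<Sum>i\<in>UNIV. \<Sum>j\<in>UNIV. max 0 (- (X $ i $ j)))"

definition moreau_theta :: "real \<Rightarrow> real^'r^'n \<Rightarrow> real" where
  "moreau_theta \<gamma> X = (INF Z. (1 / (2 * \<gamma>)) * (norm (Z - X))\<^sup>2 + theta Z)"

definition global_mins :: "('a \<Rightarrow> real) \<Rightarrow> 'a set \<Rightarrow> 'a set" where
  "global_mins f S = {X \<in> S. \<forall>Y\<in>S. f X \<le> f Y}"

definition local_mins :: "('a::metric_space \<Rightarrow> real) \<Rightarrow> 'a set \<Rightarrow> 'a set" where
  "local_mins f S = {X \<in> S. \<exists>\<delta>>0. \<forall>Y\<in>S. dist Y X < \<delta> \<longrightarrow> f X \<le> f Y}"

definition min_nonzero_entry :: "real^'r^'n \<Rightarrow> real" where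
  "min_nonzero_entry X = Min {X $ i $ j | i j. X $ i $ j \<noteq> 0}"

definition no_zero_rows :: "real^'r^'n \<Rightarrow> bool" where
  "no_zero_rows X = (\<forall>i. \<exists>j. X $ i $ j \<noteq> 0)"

end

theory Submission
  imports Defs
begin

lemma norm_sq_entries: "(norm (X::real^'r^'n))\<^sup>2 = (\<Sum>i\<in>UNIV. \<Sum>j\<in>UNIV. (X$i$j)\<^sup>2)"
  unfolding power2_norm_eq_inner inner_vec_def by (simp add: power2_eq_square)

lemma entry_le_norm:
  fixes X :: "real^'r^'n"
  shows "\<bar>X$i$j\<bar> \<le> norm X"
  using Finite_Cartesian_Product.norm_nth_le[of "X$i" j] Finite_Cartesian_Product.norm_nth_le[of X i] by simp

lemma stiefel_iff: "X \<in> (stiefel::(real^'r^'n) set) \<longleftrightarrow>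
   (\<forall>j k. (\<Sum>i\<in>UNIV. X$i$j * X$i$k) = (if j = k then 1 else 0))"
  unfolding stiefel_def
  by (auto simp: vec_eq_iff matrix_matrix_mult_def transpose_def mat_def)

lemma cont_entry: "continuous_on S (\<lambda>X::real^'r^'n. X$i$j)"
  by (intro continuous_intros)

lemma closed_stiefel: "closed (stiefel::(real^'r^'n) set)"
proof -
  have "stiefel = (\<Inter>j. \<Inter>k. {X::real^'r^'n. (\<Sum>i\<in>UNIV. X$i$j * X$i$k) = (if j = k then 1 else 0)})"
    by (auto simp: stiefel_iff)
  moreover have "closed {X::real^'r^'n. (\<Sum>i\<in>UNIV. X$i$j * X$i$k) = (if j = k then 1 else 0)}" for j k
    by (intro closed_Collect_eq continuous_intros)
  ultimately show ?thesis by (metis (no_types, lifting) closed_INT)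
qed

lemma closed_nonneg: "closed (nonneg_mats::(real^'r^'n) set)"
proof -
  have "nonneg_mats = (\<Inter>i. \<Inter>j. {X::real^'r^'n. 0 \<le> X$i$j})"
    by (auto simp: nonneg_mats_def)
  moreover have "closed {X::real^'r^'n. 0 \<le> X$i$j}" for i j
    by (intro closed_Collect_le continuous_intros)
  ultimately show ?thesis by (metis (no_types, lifting) closed_INT)
qed

lemma stiefel_norm:
  fixes X :: "real^'r^'n"
  assumes "X \<in> stiefel"
  shows "(norm X)\<^sup>2 = real CARD('r)"
proof -
  note \<open>X \<in> stiefel\<close>
  hence "(\<Sum>i\<in>UNIV. X$i$j * X$i$j) = 1" for j by (auto simp: stiefel_iff)
  hence "(norm X)\<^sup>2 = (\<Sum>j\<in>(UNIV::'r set). (1::real))"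
    unfolding norm_sq_entries by (subst sum.swap) (simp add: power2_eq_square)
  thus ?thesis by simp
qed

lemma compact_stiefel: "compact (stiefel::(real^'r^'n) set)"
proof -
  have "bounded (stiefel::(real^'r^'n) set)"
    unfolding bounded_iff
    by (rule exI[of _ "sqrt (real CARD('r))"]) (auto dest!: stiefel_norm intro: real_le_rsqrt)
  thus ?thesis using closed_stiefel by (simp add: compact_eq_bounded_closed)
qed

lemma closed_nn: "closed (nn_stiefel::(real^'r^'n) set)"
  unfolding nn_stiefel_def using closed_stiefel closed_nonneg by auto

lemma compact_nn: "compact (nn_stiefel::(real^'r^'n) set)"
  unfolding nn_stiefel_def using compact_Int_closed[OF compact_stiefel closed_nonneg] by (simp add: Int_commute)

lemma nn_nonempty:
  assumes "CARD('r) \<le> CARD('n)"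
  shows "(nn_stiefel::(real^'r^'n) set) \<noteq> {}"
proof -
  obtain g :: "'r \<Rightarrow> 'n" where g: "inj_on g UNIV"
    using card_le_inj[of "UNIV::'r set" "UNIV::'n set"] assms by (metis finite_class.finite_UNIV)
  define E :: "real^'r^'n" where "E = (\<chi> i j. if i = g j then 1 else 0)"
  have "E \<in> stiefel"
    unfolding stiefel_iff
  proof (intro allI)
    fix j k
    have "(\<Sum>i\<in>UNIV. E$i$j * E$i$k) = (\<Sum>i\<in>UNIV. if i = g j then (if g j = g k then 1 else 0) else 0)"
      by (intro sum.cong) (auto simp: E_def)
    also have "\<dots> = (if j = k then 1 else 0)"
      using g by (simp add: inj_eq)
    finally show "(\<Sum>i\<in>UNIV. E$i$j * E$i$k) = (if j = k then 1 else 0)" .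
  qed
  moreover have "E \<in> nonneg_mats" by (auto simp: nonneg_mats_def E_def)
  ultimately show ?thesis by (auto simp: nn_stiefel_def)
qed

lemma proj_exists:
  assumes "CARD('r) \<le> CARD('n)"
  shows "\<exists>Xb. Xb \<in> proj_set nn_stiefel (X::real^'r^'n)"
proof -
  obtain x where "x \<in> nn_stiefel" "\<And>y. y \<in> nn_stiefel \<Longrightarrow> dist X x \<le> dist X y"
    using distance_attains_inf[OF closed_nn nn_nonempty[OF assms], of X] by metis
  thus ?thesis unfolding proj_set_def by auto
qed

lemma proj_infdist:
  assumes "Xb \<in> proj_set S X"
  shows "dist X Xb = infdist X S"
proof -
  have Xb: "Xb \<in> S" "\<And>Z. Z \<in> S \<Longrightarrow> dist X Xb \<le> dist X Z" using assms by (auto simp: proj_set_def)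
  hence "S \<noteq> {}" by auto
  have "dist X Xb \<le> infdist X S" unfolding infdist_def using \<open>S \<noteq> {}\<close> Xb
    by (auto intro!: cINF_greatest)
  thus ?thesis using infdist_le[OF Xb(1), of X] by linarith
qed

definition negsq :: "real^'r^'n \<Rightarrow> real" where
  "negsq X = (\<Sum>i\<in>UNIV. \<Sum>j\<in>UNIV. (max 0 (- (X$i$j)))\<^sup>2)"

definition phi :: "real \<Rightarrow> real \<Rightarrow> real" where
  "phi g x = min ((max 0 (-x))\<^sup>2) (g\<^sup>2) / (2*g)"

lemma phi_le:
  fixes g x z :: real
  assumes g: "g > 0"
  shows "phi g x \<le> (1/(2*g)) * (z-x)\<^sup>2 + max 0 (-z)"
proof -
  have key: "min ((max 0 (-x))\<^sup>2) (g\<^sup>2) \<le> (z-x)\<^sup>2 + 2*g*max 0 (-z)"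
  proof (cases "x \<ge> 0")
    case True thus ?thesis using g by (simp add: min_def)
  next
    case False
    show ?thesis
    proof (cases "z \<ge> 0")
      case True
      have "(z-x)\<^sup>2 - x\<^sup>2 = z * (z - 2*x)" by (simp add: power2_eq_square algebra_simps)
      moreover have "z * (z - 2*x) \<ge> 0" using True False by (intro mult_nonneg_nonneg) auto
      ultimately have "x\<^sup>2 \<le> (z-x)\<^sup>2" by linarith
      thus ?thesis using True False by (simp add: min_def)
    next
      case zneg: False
      show ?thesis
      proof (cases "x \<ge> -g")
        case True
        have "(z-x)\<^sup>2 - 2*g*z - x\<^sup>2 = z * (z - 2*x - 2*g)" by (simp add: power2_eq_square algebra_simps)
        moreover have "z * (z - 2*x - 2*g) \<ge> 0" using zneg True by (intro mult_nonpos_nonpos) auto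
        ultimately show ?thesis using zneg False by (simp add: min_def)
      next
        case xs: False
        have "(z-x)\<^sup>2 - 2*g*z - g\<^sup>2 = (z - x - g)\<^sup>2 + (-2*g*(x+g))" by (simp add: power2_eq_square algebra_simps)
        moreover have "g*(x+g) < 0" using xs g by (intro mult_pos_neg) auto
        hence "-2*g*(x+g) \<ge> 0" by simp
        moreover have "(z - x - g)\<^sup>2 \<ge> 0" by simp
        moreover have "max 0 (-z) = -z" using zneg by simp
        ultimately have "g\<^sup>2 \<le> (z-x)\<^sup>2 + 2*g*max 0 (-z)" by linarith
        moreover have "min ((max 0 (-x))\<^sup>2) (g\<^sup>2) \<le> g\<^sup>2" by simp
        ultimately show ?thesis by linarith
      qed
    qed
  qed
  have "phi g x = min ((max 0 (-x))\<^sup>2) (g\<^sup>2) * (1/(2*g))" by (simp add: phi_def)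
  also have "\<dots> \<le> ((z-x)\<^sup>2 + 2*g*max 0 (-z)) * (1/(2*g))"
    using key g by (intro mult_right_mono) auto
  also have "\<dots> = (1/(2*g)) * (z-x)\<^sup>2 + max 0 (-z)" using g by (simp add: field_simps)
  finally show ?thesis .
qed

lemma phi_nonneg: "g > 0 \<Longrightarrow> phi g x \<ge> 0"
  by (simp add: phi_def)

lemma phi_small:
  assumes "g > 0" "x \<ge> -g" shows "phi g x = (max 0 (-x))\<^sup>2 / (2*g)"
proof -
  have "(max 0 (-x))\<^sup>2 \<le> g\<^sup>2" by (rule power_mono) (use assms in auto)
  thus ?thesis unfolding phi_def by (simp add: min_def)
qed

lemma phi_zero:
  assumes "g > 0" "phi g x = 0" shows "x \<ge> 0"
proof (rule ccontr)
  assume "\<not> x \<ge> 0"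
  hence "(max 0 (-x))\<^sup>2 > 0" by simp
  moreover have "g\<^sup>2 > 0" using assms by simp
  ultimately have "min ((max 0 (-x))\<^sup>2) (g\<^sup>2) > 0" by simp
  hence "phi g x > 0" unfolding phi_def using assms by simp
  thus False using assms by simp
qed

lemma moreau_lower:
  fixes X :: "real^'r^'n"
  assumes g: "g > 0"
  shows "(\<Sum>i\<in>UNIV. \<Sum>j\<in>UNIV. phi g (X$i$j)) \<le> moreau_theta g X"
  unfolding moreau_theta_def
proof (rule cINF_greatest)
  fix Z :: "real^'r^'n"
  have "(1 / (2 * g)) * (norm (Z - X))\<^sup>2 + theta Z =
        (\<Sum>i\<in>UNIV. \<Sum>j\<in>UNIV. (1/(2*g)) * (Z$i$j - X$i$j)\<^sup>2 + max 0 (- (Z$i$j)))"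
    unfolding norm_sq_entries theta_def by (simp add: sum.distrib sum_distrib_left)
  moreover have "(\<Sum>i\<in>UNIV. \<Sum>j\<in>UNIV. phi g (X$i$j)) \<le>
        (\<Sum>i\<in>UNIV. \<Sum>j\<in>UNIV. (1/(2*g)) * (Z$i$j - X$i$j)\<^sup>2 + max 0 (- (Z$i$j)))"
    by (intro sum_mono phi_le g)
  ultimately show "(\<Sum>i\<in>UNIV. \<Sum>j\<in>UNIV. phi g (X$i$j)) \<le> (1 / (2 * g)) * (norm (Z - X))\<^sup>2 + theta Z"
    by simp
qed simp

lemma moreau_nonneg: "g > 0 \<Longrightarrow> moreau_theta g (X::real^'r^'n) \<ge> 0"
proof -
  assume g: "g > 0"
  have "0 \<le> (\<Sum>i\<in>UNIV. \<Sum>j\<in>UNIV. phi g (X$i$j))" by (intro sum_nonneg phi_nonneg g)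
  thus ?thesis using moreau_lower[OF g, of X] by linarith
qed

lemma moreau_zero:
  fixes X :: "real^'r^'n"
  assumes g: "g > 0" and X: "X \<in> nonneg_mats"
  shows "moreau_theta g X = 0"
proof -
  have "theta X = 0" using X unfolding theta_def nonneg_mats_def by (intro sum.neutral ballI) simp
  hence "moreau_theta g X \<le> 0" unfolding moreau_theta_def
    apply (rule_tac order_trans[OF cINF_lower[of _ _ X]])
    using g by (auto intro!: bdd_belowI[of _ 0] add_nonneg_nonneg sum_nonneg simp: theta_def)
  thus ?thesis using moreau_nonneg[OF g, of X] by simp
qed

lemma moreau_pos:
  fixes X :: "real^'r^'n"
  assumes g: "g > 0" and X: "X \<notin> nonneg_mats"
  shows "moreau_theta g X > 0"
proof -
  obtain i j where "X$i$j < 0" using X by (auto simp: nonneg_mats_def not_le)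
  hence "phi g (X$i$j) \<noteq> 0" using phi_zero[OF g, of "X$i$j"] by linarith
  hence "phi g (X$i$j) > 0" using phi_nonneg[OF g, of "X$i$j"] by linarith
  hence "0 < (\<Sum>j\<in>UNIV. phi g (X$i$j))"
    using phi_nonneg[OF g] by (intro sum_pos2[of _ j]) auto
  hence "0 < (\<Sum>i\<in>UNIV. \<Sum>j\<in>UNIV. phi g (X$i$j))"
    using phi_nonneg[OF g] by (intro sum_pos2[of _ i]) (auto intro: sum_nonneg)
  thus ?thesis using moreau_lower[OF g, of X] by simp
qed

lemma moreau_negsq:
  fixes X :: "real^'r^'n"
  assumes g: "g > 0" and X: "\<And>i j. X$i$j \<ge> -g"
  shows "negsq X \<le> 2 * g * moreau_theta g X"
proof -
  have "(\<Sum>i\<in>UNIV. \<Sum>j\<in>UNIV. phi g (X$i$j)) = negsq X / (2*g)"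
    unfolding negsq_def using phi_small[OF g X] by (simp add: sum_divide_distrib)
  hence "negsq X = 2 * g * (\<Sum>i\<in>UNIV. \<Sum>j\<in>UNIV. phi g (X$i$j))" using g by (simp add: field_simps)
  thus ?thesis using moreau_lower[OF g, of X] g by simp
qed

lemma infdist_nonneg_le: "(infdist (X::real^'r^'n) nonneg_mats)\<^sup>2 \<le> negsq X"
proof -
  define Y :: "real^'r^'n" where "Y = (\<chi> i j. max 0 (X$i$j))"
  have "Y \<in> nonneg_mats" by (simp add: Y_def nonneg_mats_def)
  hence "infdist X nonneg_mats \<le> dist X Y" by (rule infdist_le)
  hence "(infdist X nonneg_mats)\<^sup>2 \<le> (dist X Y)\<^sup>2" by (simp add: infdist_nonneg power_mono)
  also have "(dist X Y)\<^sup>2 = negsq X" unfolding dist_norm norm_sq_entries negsq_def Y_def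
    by (intro sum.cong refl) (simp add: max_def power2_eq_square)
  finally show ?thesis .
qed

lemma nn_nonneg: "Xs \<in> nn_stiefel \<Longrightarrow> Xs$i$j \<ge> 0"
  by (simp add: nn_stiefel_def nonneg_mats_def)

lemma st_orth: "X \<in> stiefel \<Longrightarrow> (\<Sum>i\<in>UNIV. X$i$j * X$i$k) = (if j = k then 1 else 0)"
  by (simp add: stiefel_iff)

lemma st_col: "X \<in> stiefel \<Longrightarrow> (\<Sum>i\<in>UNIV. (X$i$j)\<^sup>2) = 1"
  using st_orth[of X j j] by (simp add: power2_eq_square)

lemma entry_le1:
  fixes X :: "real^'r^'n"
  assumes "X \<in> stiefel" shows "\<bar>X$i$j\<bar> \<le> 1"
proof -
  have "(X$i$j)\<^sup>2 \<le> (\<Sum>i\<in>UNIV. (X$i$j)\<^sup>2)"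
    by (rule member_le_sum) auto
  hence "(X$i$j)\<^sup>2 \<le> 1\<^sup>2" using st_col[OF assms] by simp
  thus ?thesis using abs_le_square_iff[of "X$i$j" 1] by simp
qed

lemma nn_unique:
  fixes Xs :: "real^'r^'n"
  assumes Xs: "Xs \<in> nn_stiefel" and a: "Xs$i$j \<noteq> 0" and b: "Xs$i$k \<noteq> 0"
  shows "j = k"
proof (rule ccontr)
  assume jk: "j \<noteq> k"
  have st: "Xs \<in> stiefel" using Xs by (simp add: nn_stiefel_def)
  have "(\<Sum>i\<in>UNIV. Xs$i$j * Xs$i$k) = 0" using st_orth[OF st, of j k] jk by simp
  moreover have "\<forall>i\<in>UNIV. Xs$i$j * Xs$i$k \<ge> 0" using nn_nonneg[OF Xs] by simp
  moreover have fin: "finite (UNIV::'n set)" by simp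
  ultimately have "\<forall>i\<in>UNIV. Xs$i$j * Xs$i$k = 0"
    using sum_nonneg_eq_0_iff[OF fin, of "\<lambda>i. Xs$i$j * Xs$i$k"] by blast
  thus False using a b by (metis UNIV_I mult_eq_0_iff)
qed

lemma sum_split_at:
  fixes h :: "'a::finite \<Rightarrow> real"
  shows "(\<Sum>j\<in>UNIV. h j) = h k + (\<Sum>j\<in>UNIV. if k = j then 0 else h j)"
proof -
  have "(\<Sum>j\<in>UNIV. h j) = (\<Sum>j\<in>UNIV. (if k = j then h k else 0) + (if k = j then 0 else h j))"
    by (intro sum.cong) auto
  also have "\<dots> = h k + (\<Sum>j\<in>UNIV. if k = j then 0 else h j)"
    by (simp add: sum.distrib)
  finally show ?thesis .
qed

lemma sum_if_split:
  fixes A B :: "'a::finite \<Rightarrow> real"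
  shows "(\<Sum>i\<in>UNIV. if P i then A i else B i) =
         (\<Sum>i\<in>UNIV. if P i then A i else 0) + (\<Sum>i\<in>UNIV. if P i then 0 else B i)"
  unfolding sum.distrib[symmetric] by (intro sum.cong) auto

lemma min_entry_props:
  fixes Xs :: "real^'r^'n"
  assumes Xs: "Xs \<in> nn_stiefel" and a: "Xs$i$j \<noteq> 0"
  shows "0 < min_nonzero_entry Xs" "min_nonzero_entry Xs \<le> Xs$i$j" "min_nonzero_entry Xs \<le> 1"
proof -
  let ?S = "{Xs $ i $ j | i j. Xs $ i $ j \<noteq> 0}"
  have fin: "finite ?S"
  proof -
    have "?S \<subseteq> (\<lambda>(i,j). Xs$i$j) ` UNIV" by auto
    thus ?thesis by (rule finite_subset) simp
  qed
  have mem: "Xs$i$j \<in> ?S" using a by blast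
  show "min_nonzero_entry Xs \<le> Xs$i$j" unfolding min_nonzero_entry_def
    using fin mem by (rule Min_le)
  have "min_nonzero_entry Xs \<in> ?S" unfolding min_nonzero_entry_def
    using fin mem by (intro Min_in) auto
  then obtain i' j' where "min_nonzero_entry Xs = Xs$i'$j'" "Xs$i'$j' \<noteq> 0" by blast
  thus "0 < min_nonzero_entry Xs" using nn_nonneg[OF Xs, of i' j'] by simp
  have "Xs$i$j \<le> 1" using entry_le1[of Xs i j] Xs by (simp add: nn_stiefel_def)
  thus "min_nonzero_entry Xs \<le> 1" using \<open>min_nonzero_entry Xs \<le> Xs$i$j\<close> by simp
qed

lemma rowsum_identity:
  fixes X :: "real^'r^'n"
  assumes X: "X \<in> stiefel"
  shows "(\<Sum>i\<in>UNIV. (\<Sum>j\<in>UNIV. X$i$j)\<^sup>2) = (\<Sum>i\<in>UNIV. \<Sum>j\<in>UNIV. (X$i$j)\<^sup>2)"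
proof -
  have "(\<Sum>i\<in>UNIV. (\<Sum>j\<in>UNIV. X$i$j)\<^sup>2) = (\<Sum>i\<in>UNIV. \<Sum>j\<in>UNIV. \<Sum>k\<in>UNIV. X$i$j * X$i$k)"
    by (simp only: power2_eq_square sum_product)
  also have "\<dots> = (\<Sum>j\<in>UNIV. \<Sum>i\<in>UNIV. \<Sum>k\<in>UNIV. X$i$j * X$i$k)"
    by (rule sum.swap)
  also have "\<dots> = (\<Sum>j\<in>UNIV. \<Sum>k\<in>UNIV. \<Sum>i\<in>UNIV. X$i$j * X$i$k)"
    by (rule sum.cong[OF refl], rule sum.swap)
  also have "\<dots> = (\<Sum>j\<in>(UNIV::'r set). \<Sum>k\<in>UNIV. if j = k then 1 else 0)"
    using st_orth[OF X] by simp
  also have "\<dots> = (\<Sum>j\<in>(UNIV::'r set). 1)" by simp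
  also have "\<dots> = (\<Sum>j\<in>UNIV. \<Sum>i\<in>UNIV. (X$i$j)\<^sup>2)" using st_col[OF X] by simp
  also have "\<dots> = (\<Sum>i\<in>UNIV. \<Sum>j\<in>UNIV. (X$i$j)\<^sup>2)" by (rule sum.swap)
  finally show ?thesis .
qed

lemma sq_sum_card:
  fixes h :: "'n::finite \<Rightarrow> 'r::finite \<Rightarrow> real"
  shows "(\<Sum>i\<in>UNIV. \<Sum>j\<in>UNIV. h i j)\<^sup>2 \<le> real CARD('n) * real CARD('r) * (\<Sum>i\<in>UNIV. \<Sum>j\<in>UNIV. (h i j)\<^sup>2)"
proof -
  have e1: "(\<Sum>i\<in>UNIV. \<Sum>j\<in>UNIV. h i j) = (\<Sum>p\<in>UNIV. h (fst p) (snd p))"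
    by (simp add: sum.cartesian_product case_prod_beta)
  have e2: "(\<Sum>i\<in>UNIV. \<Sum>j\<in>UNIV. (h i j)\<^sup>2) = (\<Sum>p\<in>UNIV. (h (fst p) (snd p))\<^sup>2)"
    by (simp add: sum.cartesian_product case_prod_beta)
  have "(\<Sum>p\<in>(UNIV::('n\<times>'r) set). h (fst p) (snd p))\<^sup>2 \<le> (\<Sum>p\<in>UNIV. (h (fst p) (snd p))\<^sup>2) * card (UNIV::('n\<times>'r) set)"
    by (rule sum_squared_le_sum_of_squares)
  moreover have "card (UNIV::('n\<times>'r) set) = CARD('n) * CARD('r)"
    using card_cartesian_product[of "UNIV::'n set" "UNIV::'r set"] by simp
  ultimately show ?thesis unfolding e1 e2 by (simp add: mult.commute)
qed

lemma entry_ineq: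
  fixes b a x :: real
  assumes "0 \<le> b" "b \<le> a" "a \<le> 1"
  shows "b * max 0 x - max 0 (-x) \<le> a * x"
proof (cases "x \<ge> 0")
  case True
  hence "b * x \<le> a * x" using assms by (intro mult_right_mono) auto
  thus ?thesis using True by simp
next
  case False
  hence "(1 - a) * (-x) \<ge> 0" using assms by (intro mult_nonneg_nonneg) auto
  thus ?thesis using False by (simp add: algebra_simps)
qed

lemma eb_main:
  fixes Xs :: "real^'r^'n"
  assumes Xs: "Xs \<in> nn_stiefel" and nz: "no_zero_rows Xs"
  shows "\<exists>\<delta>>0. \<forall>X\<in>stiefel. norm (X - Xs) \<le> \<delta> \<longrightarrow>
     (infdist X nn_stiefel)\<^sup>2 \<le> (16 * real CARD('n) * real CARD('r) / (min_nonzero_entry Xs)\<^sup>2) * negsq X"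
proof -
  define m where "m = min_nonzero_entry Xs"
  define c where "c i = (SOME j. Xs$i$j \<noteq> 0)" for i
  have cnz: "Xs$i$(c i) \<noteq> 0" for i
    unfolding c_def by (rule someI_ex) (use nz in \<open>simp add: no_zero_rows_def\<close>)
  have cpos: "Xs$i$(c i) > 0" for i using cnz[of i] nn_nonneg[OF Xs, of i "c i"] by simp
  have czero: "Xs$i$j = 0" if "c i \<noteq> j" for i j
  proof (rule ccontr)
    assume "Xs$i$j \<noteq> 0"
    hence "c i = j" by (rule nn_unique[OF Xs cnz[of i]])
    thus False using that by simp
  qed
  have mpos: "m > 0" and mle: "m \<le> Xs$i$(c i)" and m1: "m \<le> 1" for i
    using min_entry_props[OF Xs cnz[of i]] by (auto simp: m_def)
  have XsSt: "Xs \<in> stiefel" using Xs by (simp add: nn_stiefel_def)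
  have cov: "\<exists>i. c i = j" for j
  proof -
    have "(\<Sum>i\<in>UNIV. (Xs$i$j)\<^sup>2) = 1" by (rule st_col[OF XsSt])
    moreover have "(\<Sum>i\<in>UNIV. (Xs$i$j)\<^sup>2) = 0" if "\<forall>i. Xs$i$j = 0" using that by simp
    ultimately obtain i where "Xs$i$j \<noteq> 0" by force
    thus ?thesis using czero by blast
  qed
  define \<delta> where "\<delta> = m / 4"
  have dpos: "\<delta> > 0" using mpos by (simp add: \<delta>_def)
  have "\<forall>X\<in>stiefel. norm (X - Xs) \<le> \<delta> \<longrightarrow>
     (infdist X nn_stiefel)\<^sup>2 \<le> (16 * real CARD('n) * real CARD('r) / m\<^sup>2) * negsq X"
  proof (intro ballI impI)
    fix X :: "real^'r^'n"
    assume X: "X \<in> stiefel" and dX: "norm (X - Xs) \<le> \<delta>"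
    have ent: "\<bar>X$i$j - Xs$i$j\<bar> \<le> \<delta>" for i j
      using entry_le_norm[of "X - Xs" i j] dX by simp
    have on: "X$i$(c i) \<ge> 3*m/4" for i
      using ent[of i "c i"] mle[of i] unfolding \<delta>_def abs_le_iff by linarith
    have off: "\<bar>X$i$j\<bar> \<le> \<delta>" if "c i \<noteq> j" for i j
      using ent[of i j] czero[OF that] by simp
    have le1: "\<bar>X$i$j\<bar> \<le> 1" for i j by (rule entry_le1[OF X])
    define pp where "pp j = (\<Sum>i\<in>UNIV. if c i = j then (X$i$j)\<^sup>2 else 0)" for j
    define qq where "qq j = (\<Sum>i\<in>UNIV. if c i = j then 0 else (X$i$j)\<^sup>2)" for j
    define p where "p j = sqrt (pp j)" for j
    have ppq: "pp j + qq j = 1" for j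
      unfolding pp_def qq_def using st_col[OF X, of j] sum_if_split[of "\<lambda>i. c i = j" "\<lambda>i. (X$i$j)\<^sup>2" "\<lambda>i. (X$i$j)\<^sup>2"]
      by (simp only: if_cancel)
    have qq0: "qq j \<ge> 0" for j unfolding qq_def by (intro sum_nonneg) auto
    have pppos: "pp j > 0" for j
    proof -
      obtain i where i: "c i = j" using cov by blast
      have "X$i$j > 0" using on[of i] mpos i by auto
      hence "(if c i = j then (X$i$j)\<^sup>2 else 0) > 0" using i by simp
      thus ?thesis unfolding pp_def by (intro sum_pos2[of _ i]) auto
    qed
    have ppos: "p j > 0" for j using pppos by (simp add: p_def)
    have psq: "(p j)\<^sup>2 = pp j" for j using pppos[of j] by (simp add: p_def less_imp_le)
    have ple1: "p j \<le> 1" for j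
    proof -
      have "pp j \<le> 1" using ppq[of j] qq0[of j] by linarith
      thus ?thesis by (simp add: p_def)
    qed
    define Y :: "real^'r^'n" where "Y = (\<chi> i j. if c i = j then X$i$j / p j else 0)"
    have Yst: "Y \<in> stiefel" unfolding stiefel_iff
    proof (intro allI)
      fix j k
      show "(\<Sum>i\<in>UNIV. Y$i$j * Y$i$k) = (if j = k then 1 else 0)"
      proof (cases "j = k")
        case True
        have "(\<Sum>i\<in>UNIV. Y$i$j * Y$i$k) = (\<Sum>i\<in>UNIV. (if c i = j then (X$i$j)\<^sup>2 else 0) / (p j)\<^sup>2)"
          using True by (intro sum.cong) (auto simp: Y_def power2_eq_square)
        also have "\<dots> = pp j / (p j)\<^sup>2" unfolding pp_def by (simp add: sum_divide_distrib)
        also have "\<dots> = 1" using psq[of j] pppos[of j] by simp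
        finally show ?thesis using True by simp
      next
        case False
        have "(\<Sum>i\<in>UNIV. Y$i$j * Y$i$k) = (\<Sum>i\<in>(UNIV::'n set). 0)"
          using False by (intro sum.cong) (auto simp: Y_def)
        thus ?thesis using False by simp
      qed
    qed
    have Ynn: "Y \<in> nonneg_mats" unfolding nonneg_mats_def mem_Collect_eq
    proof (intro allI)
      fix i j
      show "0 \<le> Y$i$j"
      proof (cases "c i = j")
        case True
        have "X$i$j > 0" using on[of i] mpos True by auto
        thus ?thesis using True ppos[of j] by (simp add: Y_def)
      qed (simp add: Y_def)
    qed
    have Yin: "Y \<in> nn_stiefel" using Yst Ynn by (simp add: nn_stiefel_def)
    have colY: "(\<Sum>i\<in>UNIV. (X$i$j - Y$i$j)\<^sup>2) \<le> 2 * qq j" for j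
    proof -
      have "(\<Sum>i\<in>UNIV. (X$i$j - Y$i$j)\<^sup>2) =
            (\<Sum>i\<in>UNIV. if c i = j then (X$i$j)\<^sup>2 * (1 - 1 / p j)\<^sup>2 else (X$i$j)\<^sup>2)"
      proof (intro sum.cong refl)
        fix i
        have "(X$i$j)\<^sup>2 * (1 - 1 / p j)\<^sup>2 = (X$i$j * (1 - 1 / p j))\<^sup>2"
          by (simp only: power_mult_distrib)
        also have "X$i$j * (1 - 1 / p j) = X$i$j - X$i$j / p j" by (simp add: right_diff_distrib)
        finally have e: "(X$i$j)\<^sup>2 * (1 - 1 / p j)\<^sup>2 = (X$i$j - X$i$j / p j)\<^sup>2" .
        show "(X$i$j - Y$i$j)\<^sup>2 = (if c i = j then (X$i$j)\<^sup>2 * (1 - 1 / p j)\<^sup>2 else (X$i$j)\<^sup>2)"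
          using e by (simp add: Y_def)
      qed
      also have "\<dots> = pp j * (1 - 1 / p j)\<^sup>2 + qq j"
      proof -
        have "(\<Sum>i\<in>UNIV. if c i = j then (X$i$j)\<^sup>2 * (1 - 1 / p j)\<^sup>2 else 0) = pp j * (1 - 1 / p j)\<^sup>2"
          unfolding pp_def sum_distrib_right by (intro sum.cong refl) simp
        thus ?thesis by (subst sum_if_split) (simp add: qq_def)
      qed
      also have "pp j * (1 - 1 / p j)\<^sup>2 = (1 - p j)\<^sup>2"
      proof -
        have "p j * (1 - 1 / p j) = p j - 1" using ppos[of j] by (simp add: right_diff_distrib)
        hence "(p j * (1 - 1 / p j))\<^sup>2 = (1 - p j)\<^sup>2" by (simp add: power2_commute)
        thus ?thesis using psq[of j] by (simp only: power_mult_distrib)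
      qed
      also have "(1 - p j)\<^sup>2 \<le> qq j"
      proof -
        have "(1 - p j)\<^sup>2 = (1 - p j) * (1 - p j)" by (simp add: power2_eq_square)
        also have "\<dots> \<le> (1 - p j) * (1 + p j)"
          using ple1[of j] ppos[of j] by (intro mult_left_mono) auto
        also have "\<dots> = 1 - pp j" using psq[of j] by (simp add: power2_eq_square algebra_simps)
        also have "\<dots> = qq j" using ppq[of j] by simp
        finally show ?thesis .
      qed
      finally show ?thesis using qq0[of j] by linarith
    qed
    define O2 where "O2 = (\<Sum>i\<in>UNIV. \<Sum>j\<in>UNIV. if c i = j then 0 else (X$i$j)\<^sup>2)"
    have XY: "(norm (X - Y))\<^sup>2 \<le> 2 * O2"
    proof -
      have "(norm (X - Y))\<^sup>2 = (\<Sum>j\<in>UNIV. \<Sum>i\<in>UNIV. (X$i$j - Y$i$j)\<^sup>2)"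
        unfolding norm_sq_entries by (rule trans[OF sum.swap]) simp
      also have "\<dots> \<le> (\<Sum>j\<in>UNIV. 2 * qq j)" by (intro sum_mono colY)
      also have "\<dots> = 2 * (\<Sum>j\<in>UNIV. qq j)" by (simp add: sum_distrib_left)
      also have "(\<Sum>j\<in>UNIV. qq j) = O2" unfolding O2_def qq_def by (rule sum.swap)
      finally show ?thesis .
    qed
    define P where "P = (\<Sum>i\<in>UNIV. \<Sum>j\<in>UNIV. if c i = j then 0 else max 0 (X$i$j))"
    define No where "No = (\<Sum>i\<in>UNIV. \<Sum>j\<in>UNIV. if c i = j then 0 else max 0 (- X$i$j))"
    define Nn where "Nn = (\<Sum>i\<in>UNIV. \<Sum>j\<in>UNIV. max 0 (- X$i$j))"
    define S1 where "S1 = (\<Sum>i\<in>UNIV. \<Sum>j\<in>UNIV. if c i = j then 0 else \<bar>X$i$j\<bar>)"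
    define a where "a i = X$i$(c i)" for i
    define ro where "ro i = (\<Sum>j\<in>UNIV. if c i = j then 0 else X$i$j)" for i
    define w where "w i = (\<Sum>j\<in>UNIV. if c i = j then 0 else (X$i$j)\<^sup>2)" for i
    have s1: "(\<Sum>j\<in>UNIV. X$i$j) = a i + ro i" for i
      unfolding a_def ro_def by (rule sum_split_at)
    have s2: "(\<Sum>j\<in>UNIV. (X$i$j)\<^sup>2) = (a i)\<^sup>2 + w i" for i
      unfolding a_def w_def by (rule sum_split_at)
    have s3: "(\<Sum>i\<in>UNIV. (a i + ro i)\<^sup>2) = (\<Sum>i\<in>UNIV. (a i)\<^sup>2 + w i)"
      using rowsum_identity[OF X] unfolding s1 s2 .
    have s3a: "(\<Sum>i\<in>UNIV. (a i + ro i)\<^sup>2) = (\<Sum>i\<in>UNIV. (a i)\<^sup>2) + (\<Sum>i\<in>UNIV. 2 * a i * ro i) + (\<Sum>i\<in>UNIV. (ro i)\<^sup>2)"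
      by (simp add: power2_sum sum.distrib)
    have s3b: "(\<Sum>i\<in>UNIV. (a i)\<^sup>2 + w i) = (\<Sum>i\<in>UNIV. (a i)\<^sup>2) + (\<Sum>i\<in>UNIV. w i)"
      by (simp add: sum.distrib)
    have s3c: "(\<Sum>i\<in>UNIV. (ro i)\<^sup>2) \<ge> 0" by (intro sum_nonneg) simp
    have O2w: "(\<Sum>i\<in>UNIV. w i) = O2" unfolding O2_def w_def ..
    have s4: "(\<Sum>i\<in>UNIV. 2 * a i * ro i) \<le> O2" using s3 s3a s3b s3c O2w by linarith
    have s5: "a i * ro i \<ge> (\<Sum>j\<in>UNIV. if c i = j then 0 else (3*m/4) * max 0 (X$i$j) - max 0 (- X$i$j))" for i
    proof -
      have "a i * ro i = (\<Sum>j\<in>UNIV. if c i = j then 0 else a i * X$i$j)"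
        unfolding ro_def sum_distrib_left by (intro sum.cong refl) simp
      moreover have "(if c i = j then 0 else (3*m/4) * max 0 (X$i$j) - max 0 (- X$i$j)) \<le>
                     (if c i = j then 0 else a i * X$i$j)" for j
        using entry_ineq[of "3*m/4" "a i" "X$i$j"] on[of i] mpos le1[of i "c i"]
        by (auto simp: a_def abs_le_iff)
      ultimately show ?thesis by (simp add: sum_mono)
    qed
    have s6: "(\<Sum>i\<in>UNIV. \<Sum>j\<in>UNIV. if c i = j then 0 else (3*m/4) * max 0 (X$i$j) - max 0 (- X$i$j))
              = (3*m/4) * P - No"
    proof -
      have "(\<Sum>i\<in>UNIV. \<Sum>j\<in>UNIV. if c i = j then 0 else (3*m/4) * max 0 (X$i$j) - max 0 (- X$i$j))
          = (\<Sum>i\<in>UNIV. \<Sum>j\<in>UNIV. (3*m/4) * (if c i = j then 0 else max 0 (X$i$j)) - (if c i = j then 0 else max 0 (- X$i$j)))"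
        by (intro sum.cong refl) simp
      thus ?thesis unfolding P_def No_def by (simp add: sum_subtractf sum_distrib_left)
    qed
    have s7: "No \<le> Nn" unfolding No_def Nn_def by (intro sum_mono) simp
    have No0: "No \<ge> 0" unfolding No_def by (intro sum_nonneg) simp
    have P0: "P \<ge> 0" unfolding P_def by (intro sum_nonneg) simp
    have s8: "O2 \<le> \<delta> * S1"
    proof -
      have "(if c i = j then 0 else (X$i$j)\<^sup>2) \<le> \<delta> * (if c i = j then 0 else \<bar>X$i$j\<bar>)" for i j
      proof (cases "c i = j")
        case False
        have "(X$i$j)\<^sup>2 = \<bar>X$i$j\<bar> * \<bar>X$i$j\<bar>" by (simp add: power2_eq_square)
        also have "\<dots> \<le> \<delta> * \<bar>X$i$j\<bar>" using off[OF False] by (intro mult_right_mono) auto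
        finally show ?thesis using False by simp
      qed simp
      hence "O2 \<le> (\<Sum>i\<in>UNIV. \<Sum>j\<in>UNIV. \<delta> * (if c i = j then 0 else \<bar>X$i$j\<bar>))"
        unfolding O2_def by (intro sum_mono)
      thus ?thesis unfolding S1_def by (simp add: sum_distrib_left)
    qed
    have s9: "S1 = P + No" unfolding S1_def P_def No_def
      by (simp add: sum.distrib[symmetric]) (intro sum.cong refl, simp add: abs_if max_def)
    have s10: "O2 \<le> S1 * S1"
    proof -
      have U0: "(if c i = j then 0 else \<bar>X$i$j\<bar>) \<ge> 0" for i j by simp
      have US: "(if c i = j then 0 else \<bar>X$i$j\<bar>) \<le> S1" for i j
      proof -
        have "(if c i = j then 0 else \<bar>X$i$j\<bar>) \<le> (\<Sum>j\<in>UNIV. if c i = j then 0 else \<bar>X$i$j\<bar>)"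
          by (rule member_le_sum) auto
        also have "\<dots> \<le> S1" unfolding S1_def
          by (rule member_le_sum[where f="\<lambda>i. \<Sum>j\<in>UNIV. if c i = j then 0 else \<bar>X$i$j\<bar>"])
             (auto intro: sum_nonneg)
        finally show ?thesis .
      qed
      have "(if c i = j then 0 else (X$i$j)\<^sup>2) \<le> (if c i = j then 0 else \<bar>X$i$j\<bar>) * S1" for i j
      proof (cases "c i = j")
        case False
        have "(X$i$j)\<^sup>2 = \<bar>X$i$j\<bar> * \<bar>X$i$j\<bar>" by (simp add: power2_eq_square)
        also have "\<dots> \<le> \<bar>X$i$j\<bar> * S1" using US[of i j] False by (intro mult_left_mono) auto
        finally show ?thesis using False by simp
      qed simp
      hence "O2 \<le> (\<Sum>i\<in>UNIV. \<Sum>j\<in>UNIV. (if c i = j then 0 else \<bar>X$i$j\<bar>) * S1)"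
        unfolding O2_def by (intro sum_mono)
      thus ?thesis unfolding S1_def by (simp add: sum_distrib_right)
    qed
    have A1: "(\<Sum>i\<in>UNIV. 2 * a i * ro i) = 2 * (\<Sum>i\<in>UNIV. a i * ro i)"
      by (simp add: sum_distrib_left mult.assoc)
    have A2: "(\<Sum>i\<in>UNIV. a i * ro i) \<ge> 3/4 * (m * P) - No"
    proof -
      have "(\<Sum>i\<in>UNIV. a i * ro i) \<ge> (3*m/4) * P - No" using s5 s6 by (metis (no_types, lifting) sum_mono)
      thus ?thesis by (simp add: algebra_simps)
    qed
    have A3: "O2 \<le> (m * P) / 4 + (m * No) / 4" using s8 s9 by (simp add: \<delta>_def algebra_simps)
    have A4: "m * No \<le> No" using mult_right_mono[OF m1 No0] by simp
    have A5: "m * P \<le> 9/5 * No" using s4 A1 A2 A3 A4 by linarith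
    have A6: "m * S1 \<le> 14/5 * Nn" using A5 A4 s7 s9 by (simp add: algebra_simps)
    have mS0: "m * S1 \<ge> 0" using mpos s9 P0 No0 by simp
    have A7: "(m * S1)\<^sup>2 \<le> (14/5 * Nn)\<^sup>2" using A6 mS0 by (intro power_mono) auto
    have A8: "m\<^sup>2 * (norm (X - Y))\<^sup>2 \<le> 2 * (m * S1)\<^sup>2"
    proof -
      have "m\<^sup>2 * (norm (X - Y))\<^sup>2 \<le> m\<^sup>2 * (2 * O2)" using XY by (intro mult_left_mono) auto
      also have "\<dots> \<le> m\<^sup>2 * (2 * (S1 * S1))" using s10 by (intro mult_left_mono) auto
      also have "\<dots> = 2 * (m * S1)\<^sup>2" by (simp add: power2_eq_square algebra_simps)
      finally show ?thesis .
    qed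
    have A9: "Nn\<^sup>2 \<le> real CARD('n) * real CARD('r) * negsq X"
      unfolding Nn_def negsq_def by (rule sq_sum_card)
    have "m\<^sup>2 * (norm (X - Y))\<^sup>2 \<le> 16 * real CARD('n) * real CARD('r) * negsq X"
    proof -
      have "(14/5 * Nn)\<^sup>2 = 196/25 * Nn\<^sup>2" by (simp add: power2_eq_square)
      moreover have "Nn\<^sup>2 \<ge> 0" by simp
      ultimately show ?thesis using A7 A8 A9 by linarith
    qed
    hence D: "(norm (X - Y))\<^sup>2 \<le> (16 * real CARD('n) * real CARD('r) / m\<^sup>2) * negsq X"
      using mpos by (simp add: field_simps)
    have "infdist X nn_stiefel \<le> norm (X - Y)" using infdist_le[OF Yin, of X] by (simp add: dist_norm)
    hence "(infdist X nn_stiefel)\<^sup>2 \<le> (norm (X - Y))\<^sup>2" by (intro power_mono) (auto simp: infdist_nonneg)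
    thus "(infdist X nn_stiefel)\<^sup>2 \<le> (16 * real CARD('n) * real CARD('r) / m\<^sup>2) * negsq X"
      using D by linarith
  qed
  thus ?thesis using dpos by (auto simp: m_def)
qed

lemma eb_r1:
  fixes Xs :: "real^'r^'n"
  assumes r1: "CARD('r) = 1" and Xs: "Xs \<in> nn_stiefel"
  shows "\<exists>\<delta>>0. \<forall>X\<in>stiefel. norm (X - Xs) \<le> \<delta> \<longrightarrow> (infdist X nn_stiefel)\<^sup>2 \<le> 2 * negsq X"
proof -
  have jj: "j = k" for j k :: 'r
    using card_le_Suc0_iff_eq[of "UNIV::'r set"] r1 by simp
  have XsSt: "Xs \<in> stiefel" using Xs by (simp add: nn_stiefel_def)
  have "\<forall>X\<in>stiefel. norm (X - Xs) \<le> 1 \<longrightarrow> (infdist X nn_stiefel)\<^sup>2 \<le> 2 * negsq X"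
  proof (intro ballI impI)
    fix X :: "real^'r^'n"
    assume X: "X \<in> stiefel" and dX: "norm (X - Xs) \<le> 1"
    define pp where "pp j = (\<Sum>i\<in>UNIV. (max 0 (X$i$j))\<^sup>2)" for j
    define qq where "qq j = (\<Sum>i\<in>UNIV. (max 0 (- X$i$j))\<^sup>2)" for j
    define p where "p j = sqrt (pp j)" for j
    have ppq: "pp j + qq j = 1" for j
    proof -
      have "pp j + qq j = (\<Sum>i\<in>UNIV. (X$i$j)\<^sup>2)" unfolding pp_def qq_def sum.distrib[symmetric]
        by (intro sum.cong refl) (simp add: max_def)
      thus ?thesis using st_col[OF X] by simp
    qed
    have qq0: "qq j \<ge> 0" for j unfolding qq_def by (intro sum_nonneg) simp
    have pp0: "pp j \<ge> 0" for j unfolding pp_def by (intro sum_nonneg) simp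
    have pppos: "pp j > 0" for j
    proof (rule ccontr)
      assume "\<not> pp j > 0"
      hence "pp j = 0" using pp0[of j] by simp
      hence z: "\<forall>i\<in>UNIV. (max 0 (X$i$j))\<^sup>2 = 0" unfolding pp_def
        using sum_nonneg_eq_0_iff[of "UNIV::'n set" "\<lambda>i. (max 0 (X$i$j))\<^sup>2"] by simp
      have neg: "X$i$j \<le> 0" for i
      proof -
        have "(max 0 (X$i$j))\<^sup>2 = 0" using z by simp
        hence "max 0 (X$i$j) = 0" by simp
        thus ?thesis by (metis max.cobounded2)
      qed
      have "(\<Sum>i\<in>UNIV. (X$i$j - Xs$i$j)\<^sup>2) =
            (\<Sum>i\<in>UNIV. (X$i$j)\<^sup>2) + (\<Sum>i\<in>UNIV. (Xs$i$j)\<^sup>2) - 2 * (\<Sum>i\<in>UNIV. X$i$j * Xs$i$j)"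
        by (simp add: power2_diff sum.distrib sum_subtractf sum_distrib_left mult.assoc)
      also have "\<dots> = 2 - 2 * (\<Sum>i\<in>UNIV. X$i$j * Xs$i$j)" using st_col[OF X] st_col[OF XsSt] by simp
      also have "(\<Sum>i\<in>UNIV. X$i$j * Xs$i$j) \<le> 0"
        using neg nn_nonneg[OF Xs] by (intro sum_nonpos) (simp add: mult_nonpos_nonneg)
      hence "2 \<le> 2 - 2 * (\<Sum>i\<in>UNIV. X$i$j * Xs$i$j)" by simp
      finally have a: "2 \<le> (\<Sum>i\<in>UNIV. (X$i$j - Xs$i$j)\<^sup>2)" .
      have "(\<Sum>i\<in>UNIV. (X$i$j - Xs$i$j)\<^sup>2) \<le> (\<Sum>i\<in>UNIV. \<Sum>j\<in>UNIV. ((X - Xs)$i$j)\<^sup>2)"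
      proof (intro sum_mono)
        fix i
        show "(X$i$j - Xs$i$j)\<^sup>2 \<le> (\<Sum>j\<in>UNIV. ((X - Xs)$i$j)\<^sup>2)"
          using member_le_sum[of j UNIV "\<lambda>j. ((X - Xs)$i$j)\<^sup>2"] by simp
      qed
      also have "\<dots> = (norm (X - Xs))\<^sup>2" by (simp add: norm_sq_entries)
      also have "\<dots> \<le> 1" using dX by (simp add: power_le_one)
      finally show False using a by simp
    qed
    have ppos: "p j > 0" for j using pppos by (simp add: p_def)
    have psq: "(p j)\<^sup>2 = pp j" for j using pp0[of j] by (simp add: p_def)
    have ple1: "p j \<le> 1" for j
    proof -
      have "pp j \<le> 1" using ppq[of j] qq0[of j] by linarith
      thus ?thesis by (simp add: p_def)
    qed
    define Y :: "real^'r^'n" where "Y = (\<chi> i j. max 0 (X$i$j) / p j)"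
    have Yst: "Y \<in> stiefel" unfolding stiefel_iff
    proof (intro allI)
      fix j k :: 'r
      have "k = j" by (rule jj)
      have "(\<Sum>i\<in>UNIV. Y$i$j * Y$i$j) = (\<Sum>i\<in>UNIV. (max 0 (X$i$j))\<^sup>2 / (p j)\<^sup>2)"
        by (intro sum.cong refl) (simp add: Y_def power2_eq_square)
      also have "\<dots> = pp j / (p j)\<^sup>2" unfolding pp_def by (simp add: sum_divide_distrib)
      also have "\<dots> = 1" using psq[of j] pppos[of j] by simp
      finally show "(\<Sum>i\<in>UNIV. Y$i$j * Y$i$k) = (if j = k then 1 else 0)" using \<open>k = j\<close> by simp
    qed
    have Ynn: "Y \<in> nonneg_mats" unfolding nonneg_mats_def mem_Collect_eq Y_def
      using ppos by (simp add: less_imp_le)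
    have Yin: "Y \<in> nn_stiefel" using Yst Ynn by (simp add: nn_stiefel_def)
    have colY: "(\<Sum>i\<in>UNIV. (X$i$j - Y$i$j)\<^sup>2) \<le> 2 * qq j" for j
    proof -
      have e: "(X$i$j - Y$i$j)\<^sup>2 = (max 0 (- X$i$j))\<^sup>2 + (max 0 (X$i$j))\<^sup>2 * (1 - 1 / p j)\<^sup>2" for i
      proof (cases "X$i$j \<ge> 0")
        case True
        have "(X$i$j)\<^sup>2 * (1 - 1 / p j)\<^sup>2 = (X$i$j * (1 - 1 / p j))\<^sup>2"
          by (simp only: power_mult_distrib)
        also have "X$i$j * (1 - 1 / p j) = X$i$j - X$i$j / p j" by (simp add: right_diff_distrib)
        finally show ?thesis using True by (simp add: Y_def)
      next
        case False thus ?thesis by (simp add: Y_def)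
      qed
      have "(\<Sum>i\<in>UNIV. (X$i$j - Y$i$j)\<^sup>2) = qq j + pp j * (1 - 1 / p j)\<^sup>2"
        unfolding e sum.distrib qq_def pp_def sum_distrib_right ..
      also have "pp j * (1 - 1 / p j)\<^sup>2 = (1 - p j)\<^sup>2"
      proof -
        have "p j * (1 - 1 / p j) = p j - 1" using ppos[of j] by (simp add: right_diff_distrib)
        hence "(p j * (1 - 1 / p j))\<^sup>2 = (1 - p j)\<^sup>2" by (simp add: power2_commute)
        thus ?thesis using psq[of j] by (simp only: power_mult_distrib)
      qed
      also have "(1 - p j)\<^sup>2 \<le> qq j"
      proof -
        have "(1 - p j)\<^sup>2 = (1 - p j) * (1 - p j)" by (simp add: power2_eq_square)
        also have "\<dots> \<le> (1 - p j) * (1 + p j)"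
          using ple1[of j] ppos[of j] by (intro mult_left_mono) auto
        also have "\<dots> = 1 - pp j" using psq[of j] by (simp add: power2_eq_square algebra_simps)
        also have "\<dots> = qq j" using ppq[of j] by simp
        finally show ?thesis .
      qed
      finally show ?thesis by linarith
    qed
    have "(norm (X - Y))\<^sup>2 = (\<Sum>j\<in>UNIV. \<Sum>i\<in>UNIV. (X$i$j - Y$i$j)\<^sup>2)"
      unfolding norm_sq_entries by (rule trans[OF sum.swap]) simp
    also have "\<dots> \<le> (\<Sum>j\<in>UNIV. 2 * qq j)" by (intro sum_mono colY)
    also have "\<dots> = 2 * (\<Sum>j\<in>UNIV. qq j)" by (simp add: sum_distrib_left)
    also have "(\<Sum>j\<in>UNIV. qq j) = negsq X" unfolding negsq_def qq_def by (rule sum.swap)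
    finally have D: "(norm (X - Y))\<^sup>2 \<le> 2 * negsq X" .
    have "infdist X nn_stiefel \<le> norm (X - Y)" using infdist_le[OF Yin, of X] by (simp add: dist_norm)
    hence "(infdist X nn_stiefel)\<^sup>2 \<le> (norm (X - Y))\<^sup>2" by (intro power_mono) (auto simp: infdist_nonneg)
    thus "(infdist X nn_stiefel)\<^sup>2 \<le> 2 * negsq X" using D by linarith
  qed
  thus ?thesis by (intro exI[of _ 1]) auto
qed

lemma local_penalty:
  fixes f :: "real^'r^'n \<Rightarrow> real" and Xs :: "real^'r^'n"
  assumes nr: "CARD('r) \<le> CARD('n)" and g: "\<gamma> > 0" and Xs: "Xs \<in> nn_stiefel"
    and d0: "\<delta>0 > 0" and locmin: "\<forall>Y\<in>nn_stiefel. dist Y Xs < \<delta>0 \<longrightarrow> f Xs \<le> f Y"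
    and d': "\<delta>' > 0" and L': "L' > 0"
    and growth: "\<forall>X\<in>stiefel. norm (X - Xs) \<le> \<delta>' \<longrightarrow>
           (\<forall>Xb \<in> proj_set nn_stiefel X. f X - f Xb \<ge> - L' * (norm (X - Xb))\<^sup>2)"
    and d1: "\<delta>1 > 0" and K: "K \<ge> 0"
    and eb: "\<forall>X\<in>stiefel. norm (X - Xs) \<le> \<delta>1 \<longrightarrow> (infdist X nn_stiefel)\<^sup>2 \<le> K * negsq X"
  shows "\<exists>\<delta>>0. \<forall>X\<in>stiefel. norm (X - Xs) \<le> \<delta> \<longrightarrow>
            f X - f Xs + 2 * \<gamma> * K * L' * moreau_theta \<gamma> X \<ge> 0"
proof -
  define \<delta> where "\<delta> = min (min \<delta>' \<delta>1) (min (\<delta>0/3) (\<gamma>/2))"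
  have dpos: "\<delta> > 0" using d0 d' d1 g by (simp add: \<delta>_def)
  have "\<forall>X\<in>stiefel. norm (X - Xs) \<le> \<delta> \<longrightarrow> f X - f Xs + 2 * \<gamma> * K * L' * moreau_theta \<gamma> X \<ge> 0"
  proof (intro ballI impI)
    fix X :: "real^'r^'n"
    assume X: "X \<in> stiefel" and dX: "norm (X - Xs) \<le> \<delta>"
    obtain Xb where Xb: "Xb \<in> proj_set nn_stiefel X" using proj_exists[OF nr] by blast
    have Xbin: "Xb \<in> nn_stiefel" using Xb by (simp add: proj_set_def)
    have dXb: "dist X Xb = infdist X nn_stiefel" by (rule proj_infdist[OF Xb])
    have "infdist X nn_stiefel \<le> dist X Xs" by (rule infdist_le[OF Xs])
    hence dXb2: "dist X Xb \<le> \<delta>" using dX dXb by (simp add: dist_norm)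
    have "dist Xb Xs \<le> dist Xb X + dist X Xs" by (rule dist_triangle)
    also have "\<dots> \<le> 2 * \<delta>" using dXb2 dX by (simp add: dist_commute dist_norm)
    also have "\<dots> < \<delta>0" using d0 by (simp add: \<delta>_def)
    finally have "f Xs \<le> f Xb" using locmin Xbin by blast
    moreover have "f X - f Xb \<ge> - L' * (norm (X - Xb))\<^sup>2"
      using growth X dX Xb by (simp add: \<delta>_def)
    moreover have "(norm (X - Xb))\<^sup>2 \<le> K * negsq X"
      using eb X dX dXb by (simp add: \<delta>_def dist_norm)
    moreover have "negsq X \<le> 2 * \<gamma> * moreau_theta \<gamma> X"
    proof (rule moreau_negsq[OF g])
      fix i j
      have "\<bar>(X - Xs)$i$j\<bar> \<le> norm (X - Xs)" by (rule entry_le_norm)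
      moreover have "Xs$i$j \<ge> 0" using Xs by (simp add: nn_stiefel_def nonneg_mats_def)
      moreover have "norm (X - Xs) \<le> \<gamma>/2" using dX by (simp add: \<delta>_def)
      ultimately show "X$i$j \<ge> -\<gamma>" using g by (auto simp: abs_le_iff)
    qed
    ultimately have "f X - f Xs \<ge> - L' * (K * (2 * \<gamma> * moreau_theta \<gamma> X))"
    proof -
      assume a: "f Xs \<le> f Xb" "f X - f Xb \<ge> - L' * (norm (X - Xb))\<^sup>2"
        "(norm (X - Xb))\<^sup>2 \<le> K * negsq X" "negsq X \<le> 2 * \<gamma> * moreau_theta \<gamma> X"
      have "K * negsq X \<le> K * (2 * \<gamma> * moreau_theta \<gamma> X)" using a(4) K by (rule mult_left_mono)
      hence "(norm (X - Xb))\<^sup>2 \<le> K * (2 * \<gamma> * moreau_theta \<gamma> X)" using a(3) by linarith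
      hence "L' * (norm (X - Xb))\<^sup>2 \<le> L' * (K * (2 * \<gamma> * moreau_theta \<gamma> X))"
        using L' by (intro mult_left_mono) auto
      thus ?thesis using a(1,2) by linarith
    qed
    thus "f X - f Xs + 2 * \<gamma> * K * L' * moreau_theta \<gamma> X \<ge> 0"
      by (simp add: algebra_simps)
  qed
  thus ?thesis using dpos by blast
qed

lemma square_no_zero_rows:
  fixes Xs :: "real^'r^'n"
  assumes nr: "CARD('n) = CARD('r)" and Xs: "Xs \<in> nn_stiefel"
  shows "no_zero_rows Xs"
proof -
  have XsSt: "Xs \<in> stiefel" using Xs by (simp add: nn_stiefel_def)
  have ex: "\<exists>i. Xs$i$j \<noteq> 0" for j
  proof (rule ccontr)
    assume "\<not> (\<exists>i. Xs$i$j \<noteq> 0)"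
    hence "(\<Sum>i\<in>UNIV. (Xs$i$j)\<^sup>2) = 0" by simp
    thus False using st_col[OF XsSt, of j] by simp
  qed
  define g where "g j = (SOME i. Xs$i$j \<noteq> 0)" for j
  have gnz: "Xs$(g j)$j \<noteq> 0" for j unfolding g_def by (rule someI_ex) (rule ex)
  have inj: "inj g"
  proof (rule injI)
    fix j k assume "g j = g k"
    thus "j = k" using nn_unique[OF Xs gnz[of j]] gnz[of k] by simp
  qed
  have "card (range g) = CARD('r)" using inj by (simp add: card_image)
  hence "range g = UNIV" using nr by (intro card_subset_eq) auto
  show ?thesis unfolding no_zero_rows_def
  proof
    fix i
    obtain j where "i = g j" using \<open>range g = UNIV\<close> by (metis UNIV_I imageE)
    thus "\<exists>j. Xs$i$j \<noteq> 0" using gnz by blast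
  qed
qed

lemma kappa_bound:
  fixes R N :: real
  assumes "R \<ge> 2" "N \<ge> R + 1"
  shows "16 * N * R \<le> (21/10)\<^sup>2 * R * (1 + 3 * R * (N - R))\<^sup>2"
proof -
  define T where "T = 1 + 3 * R * (N - R)"
  have "R * (N - R) \<ge> 2 * 1" using assms by (intro mult_mono) auto
  hence T7: "T \<ge> 7" by (simp add: T_def)
  have "(3*R - 1) * (N - R) \<ge> (3*R-1) * 1" using assms by (intro mult_left_mono) auto
  hence TN: "T \<ge> N" unfolding T_def using assms by (simp add: algebra_simps)
  have TT: "T * T \<ge> 7 * T" using T7 by (intro mult_right_mono) auto
  have "(21/10)\<^sup>2 * T\<^sup>2 = 441/100 * (T * T)" by (simp add: power2_eq_square)
  hence "16 * N \<le> (21/10)\<^sup>2 * T\<^sup>2" using TN T7 TT by linarith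
  hence "16 * N * R \<le> (21/10)\<^sup>2 * T\<^sup>2 * R" using assms by (intro mult_right_mono) auto
  thus ?thesis by (simp add: T_def algebra_simps)
qed

lemma mins_props:
  fixes f :: "real^'r^'n \<Rightarrow> real"
  assumes "Xs \<in> (if loc then local_mins f nn_stiefel else global_mins f nn_stiefel)"
  shows "Xs \<in> nn_stiefel" "\<exists>\<delta>0>0. \<forall>Y\<in>nn_stiefel. dist Y Xs < \<delta>0 \<longrightarrow> f Xs \<le> f Y"
  using assms by (auto simp: local_mins_def global_mins_def split: if_splits intro: exI[of _ 1])

lemma global_in_mins:
  fixes f :: "real^'r^'n \<Rightarrow> real"
  assumes "Xs \<in> global_mins f nn_stiefel"
  shows "Xs \<in> (if loc then local_mins f nn_stiefel else global_mins f nn_stiefel)"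
  using assms by (auto simp: local_mins_def global_mins_def intro: exI[of _ 1])

lemma psi_cont: "g > 0 \<Longrightarrow> continuous_on S (\<lambda>X::real^'r^'n. \<Sum>i\<in>UNIV. \<Sum>j\<in>UNIV. phi g (X$i$j))"
  unfolding phi_def by (intro continuous_intros) auto

theorem theorem3p10:
  fixes f :: "real^'r^'n \<Rightarrow> real"
    and \<O> :: "(real^'r^'n) set"
    and \<gamma> :: real
    and loc :: bool
  defines "Mins \<equiv> (if loc then local_mins f (nn_stiefel :: (real^'r^'n) set)
                            else global_mins f (nn_stiefel :: (real^'r^'n) set))"
  assumes nr: "CARD('n) \<ge> CARD('r)"
    and O_open: "open \<O>"
    and St_sub: "stiefel \<subseteq> \<O>"
    and f_C1: "\<exists>f'. (\<forall>X\<in>\<O>. (f has_derivative blinfun_apply (f' X)) (at X)) \<and> continuous_on \<O> f'"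
    and gamma_pos: "\<gamma> > 0"
    and zero_rows: "CARD('n) > CARD('r) \<and> CARD('r) > 1 \<longrightarrow> (\<forall>X\<in>Mins. no_zero_rows X)"
    and growth: "\<forall>Xs\<in>Mins. \<exists>\<delta>'>0. \<exists>L'>0. \<forall>X\<in>stiefel. norm (X - Xs) \<le> \<delta>' \<longrightarrow>
                    (\<forall>Xb \<in> proj_set nn_stiefel X. f X - f Xb \<ge> - L' * (norm (X - Xb))\<^sup>2)"
  shows
    "(\<forall>Xs\<in>Mins. \<forall>\<delta>' L'. \<delta>' > 0 \<and> L' > 0 \<and>
        (\<forall>X\<in>stiefel. norm (X - Xs) \<le> \<delta>' \<longrightarrow>
           (\<forall>Xb \<in> proj_set nn_stiefel X. f X - f Xb \<ge> - L' * (norm (X - Xb))\<^sup>2)) \<longrightarrow>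
        ((CARD('n) = CARD('r) \<or> (CARD('n) > CARD('r) \<and> CARD('r) = 1)) \<longrightarrow>
           (\<forall>\<kappa>'>0. (\<forall>Z\<in>(stiefel :: (real^'r^'n) set). infdist Z nn_stiefel \<le> \<kappa>' * infdist Z nonneg_mats) \<longrightarrow>
              (\<exists>\<delta>>0. \<forall>X\<in>stiefel. norm (X - Xs) \<le> \<delta> \<longrightarrow>
                 f X - f Xs + 2 * \<gamma> * \<kappa>'\<^sup>2 * L' * moreau_theta \<gamma> X \<ge> 0)))
        \<and> ((CARD('n) > CARD('r) \<and> CARD('r) > 1) \<longrightarrow>
           (let \<kappa> = 21 / 10 * sqrt (real CARD('r)) *
                      (1 + 3 * real CARD('r) * (real CARD('n) - real CARD('r)))
                     / min_nonzero_entry Xs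
            in (\<exists>\<delta>>0. \<forall>\<epsilon>\<ge>0. \<forall>X\<in>{X\<in>stiefel. moreau_theta \<gamma> X = \<epsilon>}. norm (X - Xs) \<le> \<delta> \<longrightarrow>
                 f X - f Xs + 2 * \<gamma> * \<kappa>\<^sup>2 * L' * moreau_theta \<gamma> X \<ge> 0))))
     \<and> (\<exists>\<rho>h>0. \<forall>\<rho>\<ge>\<rho>h.
          global_mins (\<lambda>X. f X + \<rho> * moreau_theta \<gamma> X) stiefel = global_mins f nn_stiefel)"
proof -
  have nr': "CARD('r) \<le> CARD('n)" using nr .
  have negsq0: "negsq (X::real^'r^'n) \<ge> 0" for X unfolding negsq_def by (intro sum_nonneg) simp
  have partA: "\<forall>Xs\<in>Mins. \<forall>\<delta>' L'. \<delta>' > 0 \<and> L' > 0 \<and>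
        (\<forall>X\<in>stiefel. norm (X - Xs) \<le> \<delta>' \<longrightarrow>
           (\<forall>Xb \<in> proj_set nn_stiefel X. f X - f Xb \<ge> - L' * (norm (X - Xb))\<^sup>2)) \<longrightarrow>
        ((CARD('n) = CARD('r) \<or> (CARD('n) > CARD('r) \<and> CARD('r) = 1)) \<longrightarrow>
           (\<forall>\<kappa>'>0. (\<forall>Z\<in>(stiefel :: (real^'r^'n) set). infdist Z nn_stiefel \<le> \<kappa>' * infdist Z nonneg_mats) \<longrightarrow>
              (\<exists>\<delta>>0. \<forall>X\<in>stiefel. norm (X - Xs) \<le> \<delta> \<longrightarrow>
                 f X - f Xs + 2 * \<gamma> * \<kappa>'\<^sup>2 * L' * moreau_theta \<gamma> X \<ge> 0)))
        \<and> ((CARD('n) > CARD('r) \<and> CARD('r) > 1) \<longrightarrow>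
           (let \<kappa> = 21 / 10 * sqrt (real CARD('r)) *
                      (1 + 3 * real CARD('r) * (real CARD('n) - real CARD('r)))
                     / min_nonzero_entry Xs
            in (\<exists>\<delta>>0. \<forall>\<epsilon>\<ge>0. \<forall>X\<in>{X\<in>stiefel. moreau_theta \<gamma> X = \<epsilon>}. norm (X - Xs) \<le> \<delta> \<longrightarrow>
                 f X - f Xs + 2 * \<gamma> * \<kappa>\<^sup>2 * L' * moreau_theta \<gamma> X \<ge> 0)))"
  proof (intro ballI allI impI)
    fix Xs :: "real^'r^'n" and \<delta>' L' :: real
    assume XsM: "Xs \<in> Mins"
    assume H: "\<delta>' > 0 \<and> L' > 0 \<and> (\<forall>X\<in>stiefel. norm (X - Xs) \<le> \<delta>' \<longrightarrow>
           (\<forall>Xb \<in> proj_set nn_stiefel X. f X - f Xb \<ge> - L' * (norm (X - Xb))\<^sup>2))"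
    have Xs: "Xs \<in> nn_stiefel" using mins_props(1)[of Xs loc f] XsM by (simp add: Mins_def)
    obtain \<delta>0 where d0: "\<delta>0 > 0" and locmin: "\<forall>Y\<in>nn_stiefel. dist Y Xs < \<delta>0 \<longrightarrow> f Xs \<le> f Y"
      using mins_props(2)[of Xs loc f] XsM by (auto simp: Mins_def)
    have d': "\<delta>' > 0" and L': "L' > 0" and gr: "\<forall>X\<in>stiefel. norm (X - Xs) \<le> \<delta>' \<longrightarrow>
           (\<forall>Xb \<in> proj_set nn_stiefel X. f X - f Xb \<ge> - L' * (norm (X - Xb))\<^sup>2)" using H by auto
    show "((CARD('n) = CARD('r) \<or> (CARD('n) > CARD('r) \<and> CARD('r) = 1)) \<longrightarrow>
           (\<forall>\<kappa>'>0. (\<forall>Z\<in>(stiefel :: (real^'r^'n) set). infdist Z nn_stiefel \<le> \<kappa>' * infdist Z nonneg_mats) \<longrightarrow>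
              (\<exists>\<delta>>0. \<forall>X\<in>stiefel. norm (X - Xs) \<le> \<delta> \<longrightarrow>
                 f X - f Xs + 2 * \<gamma> * \<kappa>'\<^sup>2 * L' * moreau_theta \<gamma> X \<ge> 0)))
        \<and> ((CARD('n) > CARD('r) \<and> CARD('r) > 1) \<longrightarrow>
           (let \<kappa> = 21 / 10 * sqrt (real CARD('r)) *
                      (1 + 3 * real CARD('r) * (real CARD('n) - real CARD('r)))
                     / min_nonzero_entry Xs
            in (\<exists>\<delta>>0. \<forall>\<epsilon>\<ge>0. \<forall>X\<in>{X\<in>stiefel. moreau_theta \<gamma> X = \<epsilon>}. norm (X - Xs) \<le> \<delta> \<longrightarrow>
                 f X - f Xs + 2 * \<gamma> * \<kappa>\<^sup>2 * L' * moreau_theta \<gamma> X \<ge> 0)))"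
    proof (intro conjI impI allI)
      fix \<kappa>' :: real
      assume k0: "\<kappa>' > 0"
      assume EB: "\<forall>Z\<in>(stiefel :: (real^'r^'n) set). infdist Z nn_stiefel \<le> \<kappa>' * infdist Z nonneg_mats"
      have eb: "\<forall>X\<in>stiefel. norm (X - Xs) \<le> 1 \<longrightarrow> (infdist X nn_stiefel)\<^sup>2 \<le> \<kappa>'\<^sup>2 * negsq X"
      proof (intro ballI impI)
        fix X :: "real^'r^'n" assume X: "X \<in> stiefel"
        have "infdist X nn_stiefel \<le> \<kappa>' * infdist X nonneg_mats" using EB X by blast
        hence "(infdist X nn_stiefel)\<^sup>2 \<le> (\<kappa>' * infdist X nonneg_mats)\<^sup>2"
          by (intro power_mono) (auto simp: infdist_nonneg)
        also have "\<dots> = \<kappa>'\<^sup>2 * (infdist X nonneg_mats)\<^sup>2" by (simp add: power_mult_distrib)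
        also have "\<dots> \<le> \<kappa>'\<^sup>2 * negsq X" by (intro mult_left_mono infdist_nonneg_le) simp
        finally show "(infdist X nn_stiefel)\<^sup>2 \<le> \<kappa>'\<^sup>2 * negsq X" .
      qed
      show "\<exists>\<delta>>0. \<forall>X\<in>stiefel. norm (X - Xs) \<le> \<delta> \<longrightarrow>
                 f X - f Xs + 2 * \<gamma> * \<kappa>'\<^sup>2 * L' * moreau_theta \<gamma> X \<ge> 0"
        by (rule local_penalty[OF nr' gamma_pos Xs d0 locmin d' L' gr _ _ eb]) auto
    next
      assume C2: "CARD('n) > CARD('r) \<and> CARD('r) > 1"
      define kk where "kk = 21 / 10 * sqrt (real CARD('r)) *
                      (1 + 3 * real CARD('r) * (real CARD('n) - real CARD('r)))
                     / min_nonzero_entry Xs"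
      have nzr: "no_zero_rows Xs" using zero_rows C2 XsM by blast
      obtain i0 where "Xs$i0$(SOME j. Xs$i0$j \<noteq> 0) \<noteq> 0"
        using nzr unfolding no_zero_rows_def by (meson someI_ex)
      hence mpos: "min_nonzero_entry Xs > 0" using min_entry_props(1)[OF Xs] by blast
      obtain \<delta>1 where d1: "\<delta>1 > 0" and eb1: "\<forall>X\<in>stiefel. norm (X - Xs) \<le> \<delta>1 \<longrightarrow>
         (infdist X nn_stiefel)\<^sup>2 \<le> (16 * real CARD('n) * real CARD('r) / (min_nonzero_entry Xs)\<^sup>2) * negsq X"
        using eb_main[OF Xs nzr] by blast
      have kb: "16 * real CARD('n) * real CARD('r) / (min_nonzero_entry Xs)\<^sup>2 \<le> kk\<^sup>2"
      proof -
        have R2: "real CARD('r) \<ge> 2" using C2 by linarith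
        have N: "real CARD('n) \<ge> real CARD('r) + 1" using C2 by linarith
        have "16 * real CARD('n) * real CARD('r) \<le>
              (21/10)\<^sup>2 * real CARD('r) * (1 + 3 * real CARD('r) * (real CARD('n) - real CARD('r)))\<^sup>2"
          by (rule kappa_bound[OF R2 N])
        also have "\<dots> = kk\<^sup>2 * (min_nonzero_entry Xs)\<^sup>2"
          using mpos by (simp add: kk_def power_mult_distrib power_divide)
        finally show ?thesis using mpos by (simp add: pos_divide_le_eq)
      qed
      have eb: "\<forall>X\<in>stiefel. norm (X - Xs) \<le> \<delta>1 \<longrightarrow> (infdist X nn_stiefel)\<^sup>2 \<le> kk\<^sup>2 * negsq X"
      proof (intro ballI impI)
        fix X :: "real^'r^'n" assume "X \<in> stiefel" "norm (X - Xs) \<le> \<delta>1"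
        hence "(infdist X nn_stiefel)\<^sup>2 \<le> (16 * real CARD('n) * real CARD('r) / (min_nonzero_entry Xs)\<^sup>2) * negsq X"
          using eb1 by blast
        also have "\<dots> \<le> kk\<^sup>2 * negsq X" using kb negsq0[of X] by (rule mult_right_mono)
        finally show "(infdist X nn_stiefel)\<^sup>2 \<le> kk\<^sup>2 * negsq X" .
      qed
      have main: "\<exists>\<delta>>0. \<forall>X\<in>stiefel. norm (X - Xs) \<le> \<delta> \<longrightarrow>
                 f X - f Xs + 2 * \<gamma> * kk\<^sup>2 * L' * moreau_theta \<gamma> X \<ge> 0"
        by (rule local_penalty[OF nr' gamma_pos Xs d0 locmin d' L' gr d1 _ eb]) simp
      show "let \<kappa> = 21 / 10 * sqrt (real CARD('r)) *
                      (1 + 3 * real CARD('r) * (real CARD('n) - real CARD('r)))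
                     / min_nonzero_entry Xs
            in (\<exists>\<delta>>0. \<forall>\<epsilon>\<ge>0. \<forall>X\<in>{X\<in>stiefel. moreau_theta \<gamma> X = \<epsilon>}. norm (X - Xs) \<le> \<delta> \<longrightarrow>
                 f X - f Xs + 2 * \<gamma> * \<kappa>\<^sup>2 * L' * moreau_theta \<gamma> X \<ge> 0)"
        unfolding Let_def kk_def[symmetric] using main by auto
    qed
  qed
  have partB: "\<exists>\<rho>h>0. \<forall>\<rho>\<ge>\<rho>h.
          global_mins (\<lambda>X. f X + \<rho> * moreau_theta \<gamma> X) stiefel = global_mins f nn_stiefel"
  proof -
    define F where "F = global_mins f (nn_stiefel :: (real^'r^'n) set)"
    define e where "e X = moreau_theta \<gamma> (X::real^'r^'n)" for X
    define \<psi> where "\<psi> X = (\<Sum>i\<in>UNIV. \<Sum>j\<in>UNIV. phi \<gamma> ((X::real^'r^'n)$i$j))" for X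
    have e_psi: "\<psi> X \<le> e X" for X unfolding \<psi>_def e_def by (rule moreau_lower[OF gamma_pos])
    have psi0: "\<psi> X \<ge> 0" for X unfolding \<psi>_def by (intro sum_nonneg phi_nonneg gamma_pos)
    have e0: "e X \<ge> 0" for X using e_psi psi0 order_trans by blast
    have psi_zero: "X \<in> nonneg_mats" if "\<psi> X = 0" for X
    proof (rule ccontr)
      assume "X \<notin> nonneg_mats"
      then obtain i j where "X$i$j < 0" by (auto simp: nonneg_mats_def not_le)
      hence "phi \<gamma> (X$i$j) \<noteq> 0" using phi_zero[OF gamma_pos, of "X$i$j"] by linarith
      hence "phi \<gamma> (X$i$j) > 0" using phi_nonneg[OF gamma_pos, of "X$i$j"] by linarith
      hence "0 < (\<Sum>j\<in>UNIV. phi \<gamma> (X$i$j))"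
        using phi_nonneg[OF gamma_pos] by (intro sum_pos2[of _ j]) auto
      hence "0 < \<psi> X"
        unfolding \<psi>_def using phi_nonneg[OF gamma_pos] by (intro sum_pos2[of _ i]) (auto intro: sum_nonneg)
      thus False using that by simp
    qed
    have e_zero: "e X = 0" if "X \<in> nonneg_mats" for X unfolding e_def by (rule moreau_zero[OF gamma_pos that])
    have e_pos: "e X > 0" if "X \<notin> nonneg_mats" for X unfolding e_def by (rule moreau_pos[OF gamma_pos that])
    have StSub: "nn_stiefel \<subseteq> (stiefel :: (real^'r^'n) set)" by (auto simp: nn_stiefel_def)
    have fcont: "continuous_on stiefel f"
    proof -
      obtain f' where f': "\<forall>X\<in>\<O>. (f has_derivative blinfun_apply (f' X)) (at X)" using f_C1 by blast
      have "isCont f X" if "X \<in> stiefel" for X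
        using f' St_sub that has_derivative_continuous by blast
      thus ?thesis by (intro continuous_at_imp_continuous_on) blast
    qed
    have fcont_nn: "continuous_on nn_stiefel f" using fcont StSub continuous_on_subset by blast
    obtain Xmin where Xmin: "Xmin \<in> nn_stiefel" "\<forall>Y\<in>nn_stiefel. f Xmin \<le> f Y"
      using continuous_attains_inf[OF compact_nn nn_nonempty[OF nr'] fcont_nn] by blast
    define fs where "fs = f Xmin"
    have XminF: "Xmin \<in> F" using Xmin by (simp add: F_def global_mins_def)
    have Fval: "f Xs = fs" if "Xs \<in> F" for Xs
      using that Xmin by (auto simp: F_def global_mins_def fs_def intro: antisym)
    have fs_le: "fs \<le> f Y" if "Y \<in> nn_stiefel" for Y using Xmin that by (simp add: fs_def)
    have loc: "\<exists>\<delta>>0. \<exists>C\<ge>0. \<forall>X\<in>stiefel. norm (X - Xs) \<le> \<delta> \<longrightarrow> f X - f Xs + C * e X \<ge> 0"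
      if XsF: "Xs \<in> F" for Xs
    proof -
      have XsM: "Xs \<in> Mins" unfolding Mins_def using XsF global_in_mins[of Xs f loc] by (simp add: F_def)
      have Xs: "Xs \<in> nn_stiefel" using XsF by (simp add: F_def global_mins_def)
      have locmin: "\<forall>Y\<in>nn_stiefel. dist Y Xs < 1 \<longrightarrow> f Xs \<le> f Y"
        using XsF by (simp add: F_def global_mins_def)
      obtain \<delta>' L' where d': "\<delta>' > 0" and L': "L' > 0" and gr: "\<forall>X\<in>stiefel. norm (X - Xs) \<le> \<delta>' \<longrightarrow>
           (\<forall>Xb \<in> proj_set nn_stiefel X. f X - f Xb \<ge> - L' * (norm (X - Xb))\<^sup>2)"
        using growth XsM by blast
      have "\<exists>\<delta>1>0. \<exists>K\<ge>0. \<forall>X\<in>stiefel. norm (X - Xs) \<le> \<delta>1 \<longrightarrow> (infdist X nn_stiefel)\<^sup>2 \<le> K * negsq X"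
      proof (cases "CARD('r) = 1")
        case True
        thus ?thesis using eb_r1[OF True Xs] by (metis zero_le_numeral)
      next
        case False
        have "0 < CARD('r)" by simp
        hence r1: "CARD('r) > 1" using False by linarith
        have "no_zero_rows Xs"
        proof (cases "CARD('n) = CARD('r)")
          case True thus ?thesis by (rule square_no_zero_rows[OF _ Xs])
        next
          case False
          hence "CARD('n) > CARD('r)" using nr by linarith
          thus ?thesis using zero_rows r1 XsM by blast
        qed
        from eb_main[OF Xs this] show ?thesis by (metis divide_nonneg_nonneg of_nat_0_le_iff mult_nonneg_nonneg zero_le_numeral zero_le_power2)
      qed
      then obtain \<delta>1 K where d1: "\<delta>1 > 0" and K: "K \<ge> 0" and eb: "\<forall>X\<in>stiefel. norm (X - Xs) \<le> \<delta>1 \<longrightarrow> (infdist X nn_stiefel)\<^sup>2 \<le> K * negsq X"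
        by blast
      obtain \<delta> where "\<delta> > 0" "\<forall>X\<in>stiefel. norm (X - Xs) \<le> \<delta> \<longrightarrow> f X - f Xs + 2 * \<gamma> * K * L' * moreau_theta \<gamma> X \<ge> 0"
        using local_penalty[OF nr' gamma_pos Xs _ locmin d' L' gr d1 K eb] by auto
      moreover have "2 * \<gamma> * K * L' \<ge> 0" using gamma_pos K L' by simp
      ultimately show ?thesis unfolding e_def by blast
    qed
    have "\<forall>Xs\<in>F. \<exists>\<delta>. \<delta> > 0 \<and> (\<exists>C\<ge>0. \<forall>X\<in>stiefel. norm (X - Xs) \<le> \<delta> \<longrightarrow> f X - f Xs + C * e X \<ge> 0)"
      using loc by blast
    then obtain D where D: "\<forall>Xs\<in>F. D Xs > 0 \<and> (\<exists>C\<ge>0. \<forall>X\<in>stiefel. norm (X - Xs) \<le> D Xs \<longrightarrow> f X - f Xs + C * e X \<ge> 0)"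
      by (metis (no_types, lifting) bchoice)
    then obtain Cf where Cf: "\<forall>Xs\<in>F. Cf Xs \<ge> 0 \<and> (\<forall>X\<in>stiefel. norm (X - Xs) \<le> D Xs \<longrightarrow> f X - f Xs + Cf Xs * e X \<ge> 0)"
      by (metis (no_types, lifting) bchoice)
    have Fsub: "F \<subseteq> nn_stiefel" by (auto simp: F_def global_mins_def)
    have Fcomp: "compact F"
    proof -
      have "F = nn_stiefel \<inter> f -` {..fs}"
        using Fval fs_le by (auto simp: F_def global_mins_def fs_def) (meson order_trans)
      moreover have "closed (nn_stiefel \<inter> f -` {..fs})"
        using continuous_closed_preimage[OF fcont_nn closed_nn closed_atMost[of fs]] by (simp add: Int_commute)
      ultimately show ?thesis using compact_Int_closed[OF compact_nn, of "nn_stiefel \<inter> f -` {..fs}"]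
        by (simp add: Int_left_absorb)
    qed
    have opn: "\<And>Xs. Xs \<in> F \<Longrightarrow> open (ball Xs (D Xs))" by simp
    have cov: "F \<subseteq> (\<Union>Xs\<in>F. ball Xs (D Xs))"
    proof
      fix Xs assume "Xs \<in> F"
      hence "Xs \<in> ball Xs (D Xs)" using D by simp
      thus "Xs \<in> (\<Union>Xs\<in>F. ball Xs (D Xs))" using \<open>Xs \<in> F\<close> by blast
    qed
    obtain T where T: "T \<subseteq> F" "finite T" "F \<subseteq> (\<Union>Xs\<in>T. ball Xs (D Xs))"
      by (rule compactE_image[OF Fcomp opn cov])
    define U where "U = (\<Union>Xs\<in>T. ball Xs (D Xs))"
    define CM where "CM = (\<Sum>Xs\<in>T. Cf Xs)"
    have CM: "Cf Xs \<le> CM" if "Xs \<in> T" for Xs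
      unfolding CM_def using T that Cf by (intro member_le_sum) auto
    have Uopen: "open U" unfolding U_def by auto
    have inU: "f Y + \<rho> * e Y \<ge> fs + e Y" if YS: "Y \<in> stiefel" and YU: "Y \<in> U" and rr: "\<rho> \<ge> CM + 1" for Y \<rho>
    proof -
      obtain Xs where Xs: "Xs \<in> T" "Y \<in> ball Xs (D Xs)" using YU unfolding U_def by blast
      have XsF: "Xs \<in> F" using Xs T by blast
      have "norm (Y - Xs) \<le> D Xs" using Xs by (simp add: dist_norm norm_minus_commute)
      hence "f Y - fs + Cf Xs * e Y \<ge> 0" using Cf XsF YS Fval[OF XsF] by auto
      moreover have "(\<rho> - Cf Xs) * e Y \<ge> 1 * e Y"
        using CM[OF Xs(1)] rr e0[of Y] by (intro mult_right_mono) auto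
      ultimately show ?thesis by (simp add: algebra_simps)
    qed
    define Kc where "Kc = stiefel - U"
    have Kcomp: "compact Kc" unfolding Kc_def using compact_stiefel Uopen by (rule compact_diff)
    have inK: "\<exists>\<rho>1>0. \<forall>Y\<in>Kc. \<forall>\<rho>\<ge>\<rho>1. f Y + \<rho> * e Y > fs"
    proof (cases "Kc = {}")
      case True thus ?thesis by (intro exI[of _ 1]) auto
    next
      case False
      define q where "q Y = \<psi> Y + max 0 (f Y - fs)" for Y
      have KcSt: "Kc \<subseteq> stiefel" by (auto simp: Kc_def)
      have pc: "continuous_on Kc \<psi>" unfolding \<psi>_def by (rule psi_cont[OF gamma_pos])
      have fc: "continuous_on Kc f" by (rule continuous_on_subset[OF fcont KcSt])
      have qcont: "continuous_on Kc q" unfolding q_def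
        by (intro continuous_on_add pc continuous_on_max continuous_on_const continuous_on_diff fc)
      obtain Ym where Ym: "Ym \<in> Kc" "\<forall>Y\<in>Kc. q Ym \<le> q Y"
        using continuous_attains_inf[OF Kcomp False qcont] by blast
      define \<mu> where "\<mu> = q Ym"
      have qpos: "q Y > 0" if "Y \<in> Kc" for Y
      proof (rule ccontr)
        assume "\<not> q Y > 0"
        hence "\<psi> Y = 0" "f Y \<le> fs" using psi0[of Y] unfolding q_def by auto
        hence "Y \<in> nonneg_mats" using psi_zero by blast
        hence YS: "Y \<in> nn_stiefel" using that KcSt by (auto simp: nn_stiefel_def)
        hence "Y \<in> F" using \<open>f Y \<le> fs\<close> fs_le by (auto simp: F_def global_mins_def intro: order_trans)
        hence "Y \<in> U" using T unfolding U_def by blast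
        thus False using that by (simp add: Kc_def)
      qed
      have mu: "\<mu> > 0" using qpos Ym by (simp add: \<mu>_def)
      have mule: "\<mu> \<le> q Y" if "Y \<in> Kc" for Y using Ym that by (simp add: \<mu>_def)
      obtain Yf where Yf: "Yf \<in> stiefel" "\<forall>Y\<in>stiefel. f Yf \<le> f Y"
        using continuous_attains_inf[OF compact_stiefel _ fcont] Xmin StSub by blast
      define \<rho>1 where "\<rho>1 = 2 * \<bar>fs - f Yf\<bar> / \<mu> + 1"
      have "2 * \<bar>fs - f Yf\<bar> / \<mu> \<ge> 0" using mu by simp
      hence r1pos: "\<rho>1 > 0" unfolding \<rho>1_def by linarith
      have "\<forall>Y\<in>Kc. \<forall>\<rho>\<ge>\<rho>1. f Y + \<rho> * e Y > fs"
      proof (intro ballI allI impI)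
        fix Y \<rho> assume Y: "Y \<in> Kc" and r: "\<rho> \<ge> \<rho>1"
        have "\<rho> * e Y \<ge> \<rho> * \<psi> Y" using e_psi r r1pos by (intro mult_left_mono) auto
        show "f Y + \<rho> * e Y > fs"
        proof (cases "\<psi> Y \<ge> \<mu> / 2")
          case True
          have "\<rho> * \<psi> Y \<ge> \<rho>1 * (\<mu> / 2)" using True r r1pos mu psi0[of Y] by (intro mult_mono) auto
          also have "\<rho>1 * (\<mu> / 2) = \<bar>fs - f Yf\<bar> + \<mu> / 2" using mu by (simp add: \<rho>1_def field_simps)
          finally have "\<rho> * \<psi> Y \<ge> \<bar>fs - f Yf\<bar> + \<mu> / 2" .
          moreover have "f Y \<ge> f Yf" using Yf Y KcSt by blast
          ultimately show ?thesis using \<open>\<rho> * e Y \<ge> \<rho> * \<psi> Y\<close> mu by linarith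
        next
          case False
          hence "max 0 (f Y - fs) \<ge> \<mu> / 2" using mule[OF Y] unfolding q_def by linarith
          hence "f Y > fs" using mu by linarith
          moreover have "\<rho> * \<psi> Y \<ge> 0" using r r1pos psi0[of Y] by simp
          ultimately show ?thesis using \<open>\<rho> * e Y \<ge> \<rho> * \<psi> Y\<close> by linarith
        qed
      qed
      thus ?thesis using r1pos by blast
    qed
    then obtain \<rho>1 where r1: "\<rho>1 > 0" "\<forall>Y\<in>Kc. \<forall>\<rho>\<ge>\<rho>1. f Y + \<rho> * e Y > fs" by blast
    define \<rho>h where "\<rho>h = max \<rho>1 (CM + 1)"
    have rhpos: "\<rho>h > 0" using r1 by (simp add: \<rho>h_def)
    have "\<forall>\<rho>\<ge>\<rho>h. global_mins (\<lambda>X. f X + \<rho> * moreau_theta \<gamma> X) stiefel = global_mins f nn_stiefel"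
    proof (intro allI impI)
      fix \<rho> assume r: "\<rho> \<ge> \<rho>h"
      have lowb: "f Y + \<rho> * e Y \<ge> fs" if "Y \<in> stiefel" for Y
      proof (cases "Y \<in> U")
        case True thus ?thesis using inU[OF that True, of \<rho>] r e0[of Y] by (simp add: \<rho>h_def)
      next
        case False
        hence "Y \<in> Kc" using that by (simp add: Kc_def)
        thus ?thesis using r1 r by (auto simp: \<rho>h_def intro: less_imp_le)
      qed
      have XminV: "f Xmin + \<rho> * e Xmin = fs"
        using e_zero[of Xmin] Xmin by (simp add: fs_def nn_stiefel_def)
      show "global_mins (\<lambda>X. f X + \<rho> * moreau_theta \<gamma> X) stiefel = global_mins f nn_stiefel"
      proof
        show "global_mins (\<lambda>X. f X + \<rho> * moreau_theta \<gamma> X) stiefel \<subseteq> global_mins f nn_stiefel"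
        proof
          fix X assume "X \<in> global_mins (\<lambda>X. f X + \<rho> * moreau_theta \<gamma> X) stiefel"
          hence X: "X \<in> stiefel" "\<forall>Y\<in>stiefel. f X + \<rho> * e X \<le> f Y + \<rho> * e Y"
            by (auto simp: global_mins_def e_def)
          have le: "f X + \<rho> * e X \<le> fs" using X(2) XminV Xmin StSub by force
          have "X \<in> U"
          proof (rule ccontr)
            assume "X \<notin> U"
            hence "X \<in> Kc" using X by (simp add: Kc_def)
            hence "f X + \<rho> * e X > fs" using r1 r by (auto simp: \<rho>h_def)
            thus False using le by simp
          qed
          hence "f X + \<rho> * e X \<ge> fs + e X" using inU[OF X(1)] r by (simp add: \<rho>h_def)
          hence "e X \<le> 0" using le by simp
          hence "X \<in> nonneg_mats" using e_pos by force
          hence XS: "X \<in> nn_stiefel" using X by (simp add: nn_stiefel_def)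
          hence "e X = 0" using e_zero by (simp add: nn_stiefel_def)
          hence "f X \<le> fs" using le by simp
          thus "X \<in> global_mins f nn_stiefel" using XS fs_le by (auto simp: global_mins_def intro: order_trans)
        qed
      next
        show "global_mins f nn_stiefel \<subseteq> global_mins (\<lambda>X. f X + \<rho> * moreau_theta \<gamma> X) stiefel"
        proof
          fix X assume XF: "X \<in> global_mins f nn_stiefel"
          hence XS: "X \<in> nn_stiefel" by (simp add: global_mins_def)
          have "f X = fs" using Fval XF by (simp add: F_def)
          moreover have "e X = 0" using e_zero XS by (simp add: nn_stiefel_def)
          ultimately have "f X + \<rho> * e X = fs" by simp
          thus "X \<in> global_mins (\<lambda>X. f X + \<rho> * moreau_theta \<gamma> X) stiefel"
            using lowb XS StSub by (auto simp: global_mins_def e_def)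
        qed
      qed
    qed
    thus ?thesis using rhpos by blast
  qed
  show ?thesis using partA partB by blast
qed

end
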